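(* Let $\mathbb{L}$ be a complete orthomodular lattice and let $f:\mathcal{D}(\mathbb{L})\to\mathbb{R}$ be an abstract observable function. Then there is a unique spectral family $E:\mathbb{R}\to\mathbb{L}$ such that $f(\mathcal{J})=\inf\{\lambda\in\mathbb{R} : E_\lambda\in\mathcal{J}\}$ for all $\mathcal{J}\in\mathcal{D}(\mathbb{L})$.
   Context: A complete orthomodular lattice is a complete lattice $\mathbb{L}$ with zero $0$ and unit $1$ and an orthocomplementation $a\mapsto a^\perp$ (involutive, order-reversing, $a\wedge a^\perp=0$, $a\vee a^\perp=1$) such that $a\le b$ implies $b=a\vee(b\wedge a^\perp)$. A dual ideal of $\mathbb{L}$ is a nonempty $\mathcal{J}\subseteq\mathbb{L}$ with $0\notin\mathcal{J}$, $a,b\in\mathcal{J}\Rightarrow a\wedge b\in\mathcal{J}$, and $a\in\mathcal{J},a\le b\Rightarrow b\in\mathcal{J}$; $\mathcal{D}(\mathbb{L})$ is the set of dual ideals, topologized by the basis $\mathcal{D}_a(\mathbb{L}):=\{\mathcal{J}: a\in\mathcal{J}\}$. An abstract observable function is $f:\mathcal{D}(\mathbb{L})\to\mathbb{R}$ that is upper semicontinuous (for all $\mathcal{J}_0$, $\varepsilon>0$ there is $a\in\mathcal{J}_0$ with $f(\mathcal{J})<f(\mathcal{J}_0)+\varepsilon$ for all $\mathcal{J}\in\mathcal{D}_a(\mathbb{L})$) and satisfies $f(\bigcap_{j}\mathcal{J}_j)=\sup_j f(\mathcal{J}_j)$ for every nonempty family of dual ideals. A spectral family in $\mathbb{L}$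 is a map $E:\mathbb{R}\to\mathbb{L}$ with $E_\lambda\le E_\mu$ for $\lambda\le\mu$, $E_\lambda=\bigwedge_{\mu>\lambda}E_\mu$ for all $\lambda$, $\bigwedge_\lambda E_\lambda=0$ and $\bigvee_\lambda E_\lambda=1$. *)

theory Defs
  imports Main "HOL.Real"
begin

text \<open>A complete orthomodular lattice: the carrier is a type of class complete_lattice
  (zero = bot, unit = top) together with an orthocomplementation orth.\<close>

definition orthomodular :: "('a::complete_lattice \<Rightarrow> 'a) \<Rightarrow> bool" where
  "orthomodular orth \<longleftrightarrow>
     (\<forall>a. orth (orth a) = a) \<and>
     (\<forall>a b. a \<le> b \<longrightarrow> orth b \<le> orth a) \<and>
     (\<forall>a. inf a (orth a) = bot) \<and>
     (\<forall>a. sup a (orth a) = top) \<and>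
     (\<forall>a b. a \<le> b \<longrightarrow> b = sup a (inf b (orth a)))"

definition dual_ideal :: "'a::complete_lattice set \<Rightarrow> bool" where
  "dual_ideal J \<longleftrightarrow>
     J \<noteq> {} \<and> bot \<notin> J \<and>
     (\<forall>a\<in>J. \<forall>b\<in>J. inf a b \<in> J) \<and>
     (\<forall>a\<in>J. \<forall>b. a \<le> b \<longrightarrow> b \<in> J)"

definition abstract_observable_function :: "('a::complete_lattice set \<Rightarrow> real) \<Rightarrow> bool" where
  "abstract_observable_function f \<longleftrightarrow>
     \<comment> \<open>upper semicontinuity w.r.t. the topology with basis D_a = {J. a \<in> J}\<close>
     (\<forall>J0. dual_ideal J0 \<longrightarrow> (\<forall>\<epsilon>>0. \<exists>a\<in>J0.
         \<forall>J. dual_ideal J \<and> a \<in> J \<longrightarrow> f J < f J0 + \<epsilon>)) \<and>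
     \<comment> \<open>f of an intersection is the supremum (least upper bound) of the values\<close>
     (\<forall>F. F \<noteq> {} \<and> (\<forall>J\<in>F. dual_ideal J) \<longrightarrow>
         (\<forall>J\<in>F. f J \<le> f (\<Inter>F)) \<and>
         (\<forall>y. (\<forall>J\<in>F. f J \<le> y) \<longrightarrow> f (\<Inter>F) \<le> y))"

definition spectral_family :: "(real \<Rightarrow> 'a::complete_lattice) \<Rightarrow> bool" where
  "spectral_family E \<longleftrightarrow>
     (\<forall>l m. l \<le> m \<longrightarrow> E l \<le> E m) \<and>
     (\<forall>l. E l = Inf {E m | m. m > l}) \<and>
     Inf (range E) = bot \<and>
     Sup (range E) = top"

text \<open>x is the infimum (greatest lower bound) in the reals of the set S
  (in particular S is nonempty and bounded below).\<close>
definition is_real_inf :: "real \<Rightarrow> real set \<Rightarrow> bool" where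
  "is_real_inf x S \<longleftrightarrow> (\<forall>s\<in>S. x \<le> s) \<and> (\<forall>y. (\<forall>s\<in>S. y \<le> s) \<longrightarrow> y \<le> x)"

end

theory Submission
  imports Defs
begin

definition prin :: "'a::complete_lattice \<Rightarrow> 'a set" where
  "prin c = {b. c \<le> b}"

lemma prin_di:
  assumes "c \<noteq> bot" shows "dual_ideal (prin c)"
  unfolding dual_ideal_def
proof (intro conjI ballI allI impI)
  show "prin c \<noteq> {}" by (auto simp: prin_def)
  show "bot \<notin> prin c" using assms by (simp add: prin_def bot_unique)
  show "inf a b \<in> prin c" if "a \<in> prin c" "b \<in> prin c" for a b
    using that by (simp add: prin_def)
  show "b \<in> prin c" if "a \<in> prin c" "a \<le> b" for a b
    using that by (simp add: prin_def)
qed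

lemma f_anti:
  assumes "abstract_observable_function f" "dual_ideal J" "dual_ideal J'" "J \<subseteq> J'"
  shows "f J' \<le> f J"
proof -
  have "\<Inter>{J, J'} = J" using assms(4) by auto
  have F: "{J, J'} \<noteq> {} \<and> (\<forall>K\<in>{J, J'}. dual_ideal K)" using assms by auto
  have A: "\<forall>F. F \<noteq> {} \<and> (\<forall>J\<in>F. dual_ideal J) \<longrightarrow>
         (\<forall>J\<in>F. f J \<le> f (\<Inter>F)) \<and>
         (\<forall>y. (\<forall>J\<in>F. f J \<le> y) \<longrightarrow> f (\<Inter>F) \<le> y)"
    using assms(1) unfolding abstract_observable_function_def by (rule conjunct2)
  have "\<forall>K\<in>{J, J'}. f K \<le> f (\<Inter>{J, J'})"
    using A[rule_format, OF F] by (rule conjunct1)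
  then show ?thesis using \<open>\<Inter>{J, J'} = J\<close> by simp
qed

lemma f_usc:
  assumes "abstract_observable_function f" "dual_ideal J" "e > 0"
  shows "\<exists>a\<in>J. f (prin a) < f J + e"
proof -
  obtain a where a: "a \<in> J" "\<forall>K. dual_ideal K \<and> a \<in> K \<longrightarrow> f K < f J + e"
  proof -
    have "\<forall>J0. dual_ideal J0 \<longrightarrow> (\<forall>\<epsilon>>0. \<exists>a\<in>J0.
         \<forall>J. dual_ideal J \<and> a \<in> J \<longrightarrow> f J < f J0 + \<epsilon>)"
      using assms(1) unfolding abstract_observable_function_def by (rule conjunct1)
    then show ?thesis using assms(2,3) that by blast
  qed
  have "a \<noteq> bot" using a(1) assms(2) unfolding dual_ideal_def by metis
  moreover have "a \<in> prin a" by (simp add: prin_def)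
  ultimately have "f (prin a) < f J + e" using a(2) prin_di[of a] by blast
  then show ?thesis using a(1) by blast
qed

lemma prin_mono:
  assumes "abstract_observable_function f" "a \<noteq> bot" "a \<le> b"
  shows "f (prin a) \<le> f (prin (b::'a::complete_lattice))"
proof -
  have "b \<noteq> bot" using assms(2,3) by (metis bot_unique)
  have "prin b \<subseteq> prin a" using assms(3) by (auto simp: prin_def intro: order_trans)
  then show ?thesis using f_anti[OF assms(1) prin_di[OF \<open>b \<noteq> bot\<close>] prin_di[OF assms(2)]] by simp
qed

lemma prin_sub: "dual_ideal J \<Longrightarrow> a \<in> J \<Longrightarrow> prin a \<subseteq> J"
  unfolding dual_ideal_def prin_def by auto

lemma char:
  assumes af: "abstract_observable_function f" and sp: "spectral_family E"
    and hprp: "\<forall>J. dual_ideal J \<longrightarrow> is_real_inf (f J) {l. E l \<in> J}"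
    and c: "(c::'a::complete_lattice) \<noteq> bot"
  shows "c \<le> E l \<longleftrightarrow> f (prin c) \<le> l"
proof -
  have ir: "is_real_inf (f (prin c)) {l. c \<le> E l}"
  proof -
    have i0: "is_real_inf (f (prin c)) {l. E l \<in> prin c}" using hprp prin_di[OF c] by blast
    have seq: "{l. E l \<in> prin c} = {l. c \<le> E l}" by (simp add: prin_def)
    show ?thesis using i0 unfolding seq .
  qed
  have mono: "\<And>l m. l \<le> m \<Longrightarrow> E l \<le> E m" using sp unfolding spectral_family_def by blast
  have rc: "E l = Inf {E m | m. m > l}" using sp unfolding spectral_family_def by blast
  show ?thesis
  proof
    assume "c \<le> E l" then show "f (prin c) \<le> l" using ir unfolding is_real_inf_def by auto
  next
    assume h: "f (prin c) \<le> l"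
    have "c \<le> E m" if "m > l" for m
    proof (rule ccontr)
      assume nc: "\<not> c \<le> E m"
      have "\<forall>s\<in>{l. c \<le> E l}. m \<le> s"
      proof
        fix s assume "s \<in> {l. c \<le> E l}"
        then have s: "c \<le> E s" by simp
        show "m \<le> s"
        proof (rule ccontr)
          assume "\<not> m \<le> s"
          then have "E s \<le> E m" using mono by simp
          then show False using s nc order_trans by blast
        qed
      qed
      then have "m \<le> f (prin c)" using ir unfolding is_real_inf_def by blast
      then show False using h that by simp
    qed
    then have "c \<le> Inf {E m | m. m > l}" unfolding le_Inf_iff by blast
    then show "c \<le> E l" using rc by simp
  qed
qed

theorem theorem2p25:
  fixes orth :: "'a::complete_lattice \<Rightarrow> 'a"
    and f :: "'a set \<Rightarrow> real"
  assumes "orthomodular orth"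
    and "abstract_observable_function f"
  shows "\<exists>!E :: real \<Rightarrow> 'a. spectral_family E \<and>
           (\<forall>J. dual_ideal J \<longrightarrow> is_real_inf (f J) {l. E l \<in> J})"
proof -
  note af = assms(2)
  define E where "E l = Sup {a. a \<noteq> bot \<and> f (prin a) \<le> l}" for l
  have key: "a \<le> E l \<longleftrightarrow> f (prin a) \<le> l" if "a \<noteq> bot" for a l
  proof
    assume al: "f (prin a) \<le> l"
    have "a \<in> {a. a \<noteq> bot \<and> f (prin a) \<le> l}" using that al by simp
    then show "a \<le> E l" unfolding E_def by (rule Sup_upper)
  next
    assume h: "a \<le> E l"
    let ?F = "prin ` {a. a \<noteq> bot \<and> f (prin a) \<le> l}"
    have ne: "E l \<noteq> bot"
    proof
      assume "E l = bot"
      then have "a \<le> bot" using h by simp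
      then have "a = bot" by (rule le_bot)
      then show False using that by simp
    qed
    have Sne: "{a. a \<noteq> bot \<and> f (prin a) \<le> l} \<noteq> {}"
    proof
      assume "{a. a \<noteq> bot \<and> f (prin a) \<le> l} = {}"
      then have "E l = bot" unfolding E_def by simp
      then show False using ne by simp
    qed
    have F1: "?F \<noteq> {}" using Sne by blast
    have F2: "\<forall>J\<in>?F. dual_ideal J" using prin_di by blast
    have F: "?F \<noteq> {} \<and> (\<forall>J\<in>?F. dual_ideal J)" using F1 F2 by (rule conjI)
    have Int: "\<Inter>?F = prin (E l)"
    proof
      show "\<Inter>?F \<subseteq> prin (E l)"
      proof
        fix x assume "x \<in> \<Inter>?F"
        then have "\<forall>a\<in>{a. a \<noteq> bot \<and> f (prin a) \<le> l}. a \<le> x" by (auto simp: prin_def)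
        then have "E l \<le> x" unfolding E_def by (simp only: Sup_le_iff)
        then show "x \<in> prin (E l)" by (simp add: prin_def)
      qed
    next
      show "prin (E l) \<subseteq> \<Inter>?F"
      proof
        fix x assume "x \<in> prin (E l)"
        then have x: "E l \<le> x" by (simp add: prin_def)
        have "a \<le> x" if "a \<in> {a. a \<noteq> bot \<and> f (prin a) \<le> l}" for a
          using Sup_upper[OF that] x unfolding E_def by (rule order_trans)
        then show "x \<in> \<Inter>?F" by (auto simp: prin_def)
      qed
    qed
    have bl: "\<forall>J\<in>?F. f J \<le> l" by blast
    have su: "\<forall>y. (\<forall>J\<in>?F. f J \<le> y) \<longrightarrow> f (\<Inter>?F) \<le> y"
    proof -
      have A: "\<forall>F. F \<noteq> {} \<and> (\<forall>J\<in>F. dual_ideal J) \<longrightarrow>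
         (\<forall>J\<in>F. f J \<le> f (\<Inter>F)) \<and>
         (\<forall>y. (\<forall>J\<in>F. f J \<le> y) \<longrightarrow> f (\<Inter>F) \<le> y)"
        using af unfolding abstract_observable_function_def by (rule conjunct2)
      show ?thesis using A[rule_format, OF F] by (rule conjunct2)
    qed
    have "f (\<Inter>?F) \<le> l" using su bl by blast
    then have "f (prin (E l)) \<le> l" unfolding Int .
    then show "f (prin a) \<le> l" using prin_mono[OF af that h] by (rule order_trans[rotated])
  qed
  have Emono: "E l \<le> E m" if "l \<le> m" for l m
  proof -
    have "{a. a \<noteq> bot \<and> f (prin a) \<le> l} \<subseteq> {a. a \<noteq> bot \<and> f (prin a) \<le> m}"
      using that by auto
    then show ?thesis unfolding E_def by (rule Sup_subset_mono)
  qed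
  have spec: "spectral_family E"
    unfolding spectral_family_def
  proof (intro conjI allI impI)
    fix l m :: real assume "l \<le> m" then show "E l \<le> E m" by (rule Emono)
  next
    fix l
    let ?b = "Inf {E m | m. m > l}"
    have "?b \<le> E l"
    proof (cases "?b = bot")
      case False
      have hm: "f (prin ?b) \<le> m" if "m > l" for m
      proof -
        have "?b \<le> E m" by (rule Inf_lower) (use that in blast)
        then show ?thesis using key[OF False, of m] by simp
      qed
      have "f (prin ?b) \<le> l"
      proof (rule ccontr)
        assume "\<not> f (prin ?b) \<le> l"
        then have "f (prin ?b) \<le> (f (prin ?b) + l) / 2" using hm[of "(f (prin ?b) + l) / 2"] by simp
        then show False using \<open>\<not> f (prin ?b) \<le> l\<close> by simp
      qed
      then show ?thesis using key[OF False, of l] by simp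
    qed simp
    moreover have "E l \<le> ?b" by (rule Inf_greatest) (auto intro: Emono)
    ultimately show "E l = ?b" by simp
  next
    let ?b = "Inf (range E)"
    show "?b = bot"
    proof (rule ccontr)
      assume nb: "?b \<noteq> bot"
      have "?b \<le> E (f (prin ?b) - 1)" by (rule Inf_lower) simp
      then show False using key[OF nb, of "f (prin ?b) - 1"] by simp
    qed
  next
    show "Sup (range E) = top"
    proof (cases "(top::'a) = bot")
      case False
      have "top \<le> E (f (prin top))" using key[OF False, of "f (prin top)"] by simp
      then show ?thesis by (metis UNIV_I Sup_upper image_eqI top_le)
    qed (metis top_unique bot_least)
  qed
  have hprp: "\<forall>J. dual_ideal J \<longrightarrow> is_real_inf (f J) {l. E l \<in> J}"
  proof (intro allI impI)
    fix J :: "'a set" assume J: "dual_ideal J"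
    have lb: "\<forall>s\<in>{l. E l \<in> J}. f J \<le> s"
    proof
      fix s assume "s \<in> {l. E l \<in> J}"
      then have s: "E s \<in> J" by simp
      then have nb: "E s \<noteq> bot" using J unfolding dual_ideal_def by auto
      have "f J \<le> f (prin (E s))" using f_anti[OF af prin_di[OF nb] J prin_sub[OF J s]] .
      also have "\<dots> \<le> s" using key[OF nb, of s] by simp
      finally show "f J \<le> s" .
    qed
    have gr: "y \<le> f J" if y: "\<forall>s\<in>{l. E l \<in> J}. y \<le> s" for y
    proof (rule ccontr)
      assume "\<not> y \<le> f J"
      then obtain a where a: "a \<in> J" "f (prin a) < f J + (y - f J)"
        using f_usc[OF af J, of "y - f J"] by auto
      have nb: "a \<noteq> bot" using a(1) J unfolding dual_ideal_def by auto
      have "a \<le> E (f (prin a))" using key[OF nb, of "f (prin a)"] by simp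
      then have "E (f (prin a)) \<in> J" using a(1) J unfolding dual_ideal_def by blast
      then have "y \<le> f (prin a)" using y by auto
      then show False using a(2) by simp
    qed
    show "is_real_inf (f J) {l. E l \<in> J}" unfolding is_real_inf_def using lb gr by blast
  qed
  show ?thesis
  proof (rule ex1I[of _ E])
    show "spectral_family E \<and> (\<forall>J. dual_ideal J \<longrightarrow> is_real_inf (f J) {l. E l \<in> J})"
      using spec hprp by blast
  next
    fix E' :: "real \<Rightarrow> 'a"
    assume h: "spectral_family E' \<and> (\<forall>J. dual_ideal J \<longrightarrow> is_real_inf (f J) {l. E' l \<in> J})"
    have eq: "c \<le> E' l \<longleftrightarrow> c \<le> E l" if "c \<noteq> bot" for c l
      using char[OF af _ _ that, of E' l] char[OF af spec hprp that, of l] h by simp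
    show "E' = E"
    proof
      fix l
      have 1: "E' l \<le> E l"
      proof (cases "E' l = bot")
        case False then show ?thesis using eq[OF False, of l] by simp
      qed simp
      have 2: "E l \<le> E' l"
      proof (cases "E l = bot")
        case False then show ?thesis using eq[OF False, of l] by simp
      qed simp
      show "E' l = E l" using 1 2 by simp
    qed
  qed
qed

end
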